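(* Let $m\ge 3$. For every $\epsilon>0$ there exists $\delta>0$ such that if $f(z)=z^{m}+\sum_{k=0}^{m-1}a_kz^k$ satisfies the $\delta$-condition and $\Omega(f)$ is simply connected, then $\Omega(f)\supseteq\{z\in\mathbb{C}: |z|\ge 2^{\frac{1}{m-1}}+\epsilon\}$.
   Context: A monic polynomial $f(z)=z^{m}+\sum_{k=0}^{m-1}a_{k}z^{k}$ satisfies the $\delta$-condition if $|a_{k}|<\delta$ for all $1\le k\le m-1$ (no condition on $a_0$). $\Omega(f)=\{z\in\hat{\mathbb{C}}: f^{n}(z)\to\infty \text{ as } n\to+\infty\}$, where $f^n$ is the $n$-th iterate. *)

theory Defs
  imports "HOL-Analysis.Analysis"
begin

definition monic_poly :: "nat \<Rightarrow> (nat \<Rightarrow> complex) \<Rightarrow> complex \<Rightarrow> complex" where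
  "monic_poly m a z = z ^ m + (\<Sum>k<m. a k * z ^ k)"

definition delta_condition :: "nat \<Rightarrow> real \<Rightarrow> (nat \<Rightarrow> complex) \<Rightarrow> bool" where
  "delta_condition m \<delta> a \<longleftrightarrow> (\<forall>k\<in>{1..m-1}. norm (a k) < \<delta>)"

text \<open>Finite part of Omega(f): points whose orbit tends to infinity.\<close>
definition escaping_set :: "(complex \<Rightarrow> complex) \<Rightarrow> complex set" where
  "escaping_set f = {z. filterlim (\<lambda>n. (f ^^ n) z) at_infinity sequentially}"

text \<open>Riemann sphere modelled as the unit sphere in R^3; inverse stereographic
  projection, with infinity corresponding to the north pole (0,0,1).\<close>
definition sphere_embed :: "complex \<Rightarrow> real \<times> real \<times> real" where
  "sphere_embed z = (2 * Re z / (1 + (cmod z)\<^sup>2), 2 * Im z / (1 + (cmod z)\<^sup>2),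
                     ((cmod z)\<^sup>2 - 1) / ((cmod z)\<^sup>2 + 1))"

definition north_pole :: "real \<times> real \<times> real" where
  "north_pole = (0, 0, 1)"

definition Omega_hat :: "(complex \<Rightarrow> complex) \<Rightarrow> (real \<times> real \<times> real) set" where
  "Omega_hat f = insert north_pole (sphere_embed ` escaping_set f)"

end

theory Submission
  imports Defs "HOL-Complex_Analysis.Complex_Analysis" "HOL-Computational_Algebra.Fundamental_Theorem_Algebra"
begin

definition rt :: "nat \<Rightarrow> complex \<Rightarrow> complex" where
  "rt m v = exp (Ln v / of_nat m)"

lemma rt_pow: assumes "m \<ge> 1" "v \<noteq> 0" shows "rt m v ^ m = v"
proof -
  have "rt m v ^ m = exp (of_nat m * (Ln v / of_nat m))"
    unfolding rt_def by (metis exp_of_nat_mult)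
  also have "\<dots> = exp (Ln v)" using assms by simp
  finally show ?thesis using assms by simp
qed

lemma rt_nz: "rt m v \<noteq> 0" unfolding rt_def by simp

lemma rt_deriv: assumes "m \<ge> 1" "Re v > 0"
  shows "(rt m has_field_derivative (rt m v / (of_nat m * v))) (at v)"
proof -
  have nn: "v \<notin> \<real>\<^sub>\<le>\<^sub>0" using assms(2) by (auto simp: nonpos_Reals_def)
  have d1: "(Ln has_field_derivative inverse v) (at v)"
    using nn by (rule has_field_derivative_Ln)
  have "((\<lambda>v. exp (Ln v / of_nat m)) has_field_derivative
     (exp (Ln v / of_nat m) * (inverse v / of_nat m))) (at v)"
    by (rule DERIV_chain2[where f=exp, OF DERIV_exp DERIV_cdivide[OF d1]])
  then show ?thesis unfolding rt_def[abs_def] using assms by (simp add: field_simps)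
qed

lemma rt_holo: assumes "m \<ge> 1" shows "rt m holomorphic_on {v. Re v > 0}"
proof -
  have "{v. Re v > 0} \<inter> \<real>\<^sub>\<le>\<^sub>0 = {}" by (auto simp: nonpos_Reals_def)
  then have "Ln holomorphic_on {v. Re v > 0}" by (rule holomorphic_on_Ln)
  then show ?thesis unfolding rt_def[abs_def] using assms by (intro holomorphic_intros) (auto simp: nonpos_Reals_def)
qed

lemma alg_aux: fixes p d1 d2 :: complex assumes "d1 \<noteq> 0" "d2 \<noteq> 0"
  shows "(p*d1 - d2*p)/(d1*d1) * (1/(d2/d1)) = p/d2 - p/d1"
proof -
  have "(p*d1 - d2*p)/(d1*d1) * (1/(d2/d1)) = (p*d1 - d2*p) / (d1 * d2)"
    using assms by (simp add: divide_simps)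
  also have "\<dots> = p/d2 - p/d1" using assms by (simp add: diff_divide_distrib)
  finally show ?thesis .
qed

lemma wind_key:
  fixes m :: nat and r s :: real and \<beta> za zb va :: complex
  assumes m: "m \<ge> 1" and s: "0 < s" "s < r" and va: "cmod (va - of_real r) < s"
  and za: "za = \<beta> * rt m va" and \<beta>: "\<beta> \<noteq> 0"
  and zb: "\<forall>v. Re v > 0 \<longrightarrow> \<beta> * rt m v \<noteq> zb"
  shows "winding_number ((\<lambda>v. (\<beta> * rt m v - zb) / (\<beta> * rt m v - za)) \<circ> circlepath (of_real r) s) 0 = -1"
proof -
  define H where "H = {v::complex. Re v > 0}"
  define \<psi> where "\<psi> = (\<lambda>v. \<beta> * rt m v)"
  define \<psi>' where "\<psi>' = (\<lambda>v. \<beta> * (rt m v / (of_nat m * v)))"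
  define \<Phi> where "\<Phi> = (\<lambda>v. (\<psi> v - zb) / (\<psi> v - za))"
  define S where "S = H - {va}"
  define ua where "ua = rt m va"
  define Q where "Q = (\<lambda>w. (\<Sum>i<m. ua^(m - Suc i) * rt m w ^ i))"
  define F where "F = (\<lambda>w. rt m w * Q w / (of_nat m * w))"
  define circ where "circ = circlepath (of_real r) s"
  have Hva: "va \<in> H"
  proof -
    have "r - Re va \<le> cmod (va - of_real r)"
      by (metis abs_Re_le_cmod abs_le_iff minus_complex.simps(1) minus_diff_eq of_real_minus Re_complex_of_real)
    then show ?thesis using va s unfolding H_def by simp
  qed
  have nz: "v \<noteq> 0" if "v \<in> H" for v using that unfolding H_def by auto
  have openH: "open H" unfolding H_def by (rule open_halfspace_Re_gt)
  have convH: "convex H" unfolding H_def by (rule convex_halfspace_Re_gt)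
  have inj: "v = va" if "v \<in> H" "\<psi> v = za" for v
  proof -
    have "rt m v = rt m va" using that za \<beta> unfolding \<psi>_def by simp
    then have "rt m v ^ m = rt m va ^ m" by simp
    then show ?thesis using rt_pow[OF m] nz that(1) nz[OF Hva] by simp
  qed
  have dpsi: "(\<psi> has_field_derivative \<psi>' v) (at v)" if "v \<in> H" for v
    unfolding \<psi>_def \<psi>'_def
    by (rule DERIV_cmult, rule rt_deriv[OF m]) (use that in \<open>simp add: H_def\<close>)
  have holopsi: "\<psi> holomorphic_on H" unfolding \<psi>_def H_def using rt_holo[OF m] by (intro holomorphic_intros)
  have holopsi': "\<psi>' holomorphic_on H" unfolding \<psi>'_def
    using rt_holo[OF m] nz m unfolding H_def by (intro holomorphic_intros) auto
  have psiza: "\<psi> v - za \<noteq> 0" if "v \<in> S" for v using inj that unfolding S_def by auto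
  have psizb: "\<psi> v - zb \<noteq> 0" if "v \<in> H" for v using zb that unfolding H_def \<psi>_def by auto
  have dPhi: "(\<Phi> has_field_derivative
      ((\<psi>' v * (\<psi> v - za) - (\<psi> v - zb) * \<psi>' v) / ((\<psi> v - za) * (\<psi> v - za)))) (at v)"
    if "v \<in> S" for v
  proof -
    have vH: "v \<in> H" using that S_def by auto
    show ?thesis unfolding \<Phi>_def
      by (rule DERIV_divide[OF DERIV_diff[OF dpsi[OF vH] DERIV_const] DERIV_diff[OF dpsi[OF vH] DERIV_const],
            simplified]) (use psiza[OF that] in auto)
  qed
  have holoPhi: "\<Phi> holomorphic_on S"
    using dPhi by (meson holomorphic_on_def field_differentiable_def field_differentiable_at_within)
  have openS: "open S" unfolding S_def using openH by auto
  have pic: "path_image circ \<subseteq> S"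
  proof
    fix v assume "v \<in> path_image circ"
    then have dv: "cmod (v - of_real r) = s" unfolding circ_def using s by (simp add: dist_norm norm_minus_commute)
    have "r - Re v \<le> cmod (v - of_real r)"
      by (metis abs_Re_le_cmod abs_le_iff minus_complex.simps(1) minus_diff_eq of_real_minus Re_complex_of_real)
    then have "v \<in> H" using dv s unfolding H_def by simp
    moreover have "v \<noteq> va" using dv va by auto
    ultimately show "v \<in> S" unfolding S_def by auto
  qed
  have vc: "valid_path circ" unfolding circ_def by simp
  have vpc: "valid_path (\<Phi> \<circ> circ)" by (rule valid_path_compose_holomorphic[OF vc holoPhi openS pic])
  have z0: "0 \<notin> path_image (\<Phi> \<circ> circ)"
  proof
    assume "0 \<in> path_image (\<Phi> \<circ> circ)"
    then obtain v where v: "v \<in> path_image circ" "\<Phi> v = 0" by (auto simp: path_image_compose)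
    then have "v \<in> S" using pic by auto
    then show False using v psiza psizb unfolding \<Phi>_def S_def by auto
  qed
  have "contour_integral (\<Phi> \<circ> circ) (\<lambda>w. 1 / (w - 0)) = contour_integral circ (\<lambda>w. deriv \<Phi> w * (1 / (\<Phi> w - 0)))"
    by (rule contour_integral_comp_analyticW[OF _ vc pic]) (use holoPhi openS analytic_on_open in auto)
  also have "\<dots> = contour_integral circ (\<lambda>w. \<psi>' w / (\<psi> w - zb) - F w / (w - va))"
  proof (rule contour_integral_eq)
    fix w assume "w \<in> path_image circ"
    then have wS: "w \<in> S" using pic by auto
    then have wH: "w \<in> H" "w \<noteq> va" unfolding S_def by auto
    have dd: "deriv \<Phi> w = (\<psi>' w * (\<psi> w - za) - (\<psi> w - zb) * \<psi>' w) / ((\<psi> w - za) * (\<psi> w - za))"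
      by (rule DERIV_imp_deriv[OF dPhi[OF wS]])
    have rne: "rt m w \<noteq> ua" using inj[OF wH(1)] wH(2) unfolding \<psi>_def ua_def za by auto
    have fac: "w - va = (rt m w - ua) * Q w"
      unfolding Q_def ua_def
      using power_diff_sumr2[of "rt m w" m "rt m va"] rt_pow[OF m] nz[OF wH(1)] nz[OF Hva] by simp
    have Qnz: "Q w \<noteq> 0" using fac wH(2) by auto
    have F2: "F w / (w - va) = \<psi>' w / (\<psi> w - za)"
      unfolding F_def fac \<psi>'_def \<psi>_def za ua_def[symmetric]
      using Qnz rne \<beta> nz[OF wH(1)] m by (simp add: field_simps)
    have Pw: "\<Phi> w = (\<psi> w - zb) / (\<psi> w - za)" by (simp add: \<Phi>_def)
    have "deriv \<Phi> w * (1 / (\<Phi> w - 0)) = (\<psi>' w * (\<psi> w - za) - (\<psi> w - zb) * \<psi>' w) / ((\<psi> w - za) * (\<psi> w - za)) * (1 / ((\<psi> w - zb) / (\<psi> w - za)))"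
      by (simp only: dd Pw diff_0_right)
    also have "\<dots> = \<psi>' w / (\<psi> w - zb) - \<psi>' w / (\<psi> w - za)"
      by (rule alg_aux[OF psiza[OF wS] psizb[OF wH(1)]])
    finally show "deriv \<Phi> w * (1 / (\<Phi> w - 0)) = \<psi>' w / (\<psi> w - zb) - F w / (w - va)"
      unfolding F2 .
  qed
  also have "\<dots> = 0 - 2 * pi * \<i> * 1 * 1"
  proof (rule contour_integral_unique, rule has_contour_integral_diff)
    show "((\<lambda>w. \<psi>' w / (\<psi> w - zb)) has_contour_integral 0) circ"
    proof (rule Cauchy_theorem_convex_simple[OF _ convH vc])
      show "(\<lambda>w. \<psi>' w / (\<psi> w - zb)) holomorphic_on H"
        using holopsi holopsi' psizb by (intro holomorphic_intros) auto
      show "path_image circ \<subseteq> H" using pic S_def by auto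
      show "pathfinish circ = pathstart circ" unfolding circ_def by simp
    qed
    have w1: "winding_number circ va = 1" unfolding circ_def
      using va by (intro winding_number_circlepath) (simp add: dist_norm norm_minus_commute)
    have F1: "F va = 1"
    proof -
      have "Q va = of_nat m * ua ^ (m - 1)" unfolding Q_def ua_def
      proof -
        have "(\<Sum>i<m. rt m va ^ (m - Suc i) * rt m va ^ i) = (\<Sum>i<m. rt m va ^ (m - 1))"
        proof (intro sum.cong refl)
          fix i assume "i \<in> {..<m}"
          then have "m - Suc i + i = m - 1" by auto
          then show "rt m va ^ (m - Suc i) * rt m va ^ i = rt m va ^ (m - 1)"
            by (metis power_add)
        qed
        then show "(\<Sum>i<m. rt m va ^ (m - Suc i) * rt m va ^ i) = of_nat m * rt m va ^ (m - 1)" by simp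
      qed
      then have "F va = of_nat m * (ua * ua ^ (m - 1)) / (of_nat m * va)" unfolding F_def ua_def by simp
      also have "ua * ua ^ (m - 1) = va" using rt_pow[OF m nz[OF Hva]] m unfolding ua_def
        by (metis One_nat_def Suc_pred less_eq_Suc_le power_Suc)
      finally show ?thesis using m nz[OF Hva] by simp
    qed
    have "((\<lambda>w. F w / (w - va)) has_contour_integral (2 * pi * \<i> * winding_number circ va * F va)) circ"
    proof (rule Cauchy_integral_formula_convex_simple[OF convH])
      show "F holomorphic_on H" unfolding F_def Q_def
        using rt_holo[OF m, folded H_def] nz m by (intro holomorphic_intros) auto
      show "va \<in> interior H" using Hva openH by (simp add: interior_open)
      show "path_image circ \<subseteq> H - {va}" using pic S_def by auto
    qed (use vc circ_def in auto)
    then show "((\<lambda>w. F w / (w - va)) has_contour_integral 2 * pi * \<i> * 1 * 1) circ"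
      unfolding w1 F1 .
  qed
  finally have ci: "contour_integral (\<Phi> \<circ> circ) (\<lambda>w. 1 / (w - 0)) = - 2 * pi * \<i>" by simp
  have "winding_number (\<Phi> \<circ> circ) 0 = 1 / (2 * pi * \<i>) * contour_integral (\<Phi> \<circ> circ) (\<lambda>w. 1 / (w - 0))"
    by (rule winding_number_valid_path[OF vpc z0])
  also have "\<dots> = -1" unfolding ci by (simp add: field_simps)
  finally show ?thesis unfolding \<Phi>_def \<psi>_def circ_def by simp
qed


definition GA :: "complex \<Rightarrow> real \<times> real \<times> real \<Rightarrow> complex" where
  "GA za p = - cnj za * Complex (fst p) (fst (snd p)) + of_real (1 + snd (snd p))"
definition GB :: "complex \<Rightarrow> real \<times> real \<times> real \<Rightarrow> complex" where
  "GB za p = - cnj za * of_real (1 - snd (snd p)) + Complex (fst p) (- fst (snd p))"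

lemma embed_parts:
  fixes z :: complex
  defines "D \<equiv> 1 + (cmod z)\<^sup>2"
  shows "Complex (fst (sphere_embed z)) (fst (snd (sphere_embed z))) = of_real (2 / D) * z"
    and "Complex (fst (sphere_embed z)) (- fst (snd (sphere_embed z))) = of_real (2 / D) * cnj z"
    and "1 + snd (snd (sphere_embed z)) = (2 / D) * (cmod z)\<^sup>2"
    and "1 - snd (snd (sphere_embed z)) = 2 / D"
proof -
  have D: "D > 0" unfolding D_def by (simp add: add_pos_nonneg)
  show "Complex (fst (sphere_embed z)) (fst (snd (sphere_embed z))) = of_real (2 / D) * z"
    unfolding sphere_embed_def D_def by (simp add: complex_eq_iff)
  show "Complex (fst (sphere_embed z)) (- fst (snd (sphere_embed z))) = of_real (2 / D) * cnj z"
    unfolding sphere_embed_def D_def by (simp add: complex_eq_iff)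
  show "1 + snd (snd (sphere_embed z)) = (2 / D) * (cmod z)\<^sup>2"
    unfolding sphere_embed_def using D unfolding D_def by (simp add: field_simps)
  show "1 - snd (snd (sphere_embed z)) = 2 / D"
    unfolding sphere_embed_def using D unfolding D_def by (simp add: field_simps)
qed

lemma GA_GB_embed:
  fixes z za :: complex
  defines "D \<equiv> 1 + (cmod z)\<^sup>2"
  shows "GB za (sphere_embed z) = of_real (2 / D) * (cnj z - cnj za)"
    and "GA za (sphere_embed z) = z * GB za (sphere_embed z)"
proof -
  show B: "GB za (sphere_embed z) = of_real (2 / D) * (cnj z - cnj za)"
  proof -
    have cc: "\<And>c. -cnj za * of_real c + of_real c * cnj z = of_real c * (cnj z - cnj za)"
      by (simp add: algebra_simps)
    show ?thesis unfolding GB_def embed_parts(2,4) D_def by (rule cc)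
  qed
  have gen: "\<And>c. c * (z * cnj z - cnj za * z) = z * (c * (cnj z - cnj za))"
    by (simp add: algebra_simps)
  have sq: "(complex_of_real (cmod z))\<^sup>2 = z * cnj z" by (metis complex_norm_square of_real_power)
  have "GA za (sphere_embed z) = - cnj za * (of_real (2 / D) * z) + of_real ((2 / D) * (cmod z)\<^sup>2)"
    unfolding GA_def embed_parts(1,3) D_def ..
  also have "\<dots> = of_real (2 / D) * (z * cnj z - cnj za * z)"
    using sq by (simp add: algebra_simps)
  also have "\<dots> = z * (of_real (2 / D) * (cnj z - cnj za))"
    by (rule gen)
  finally show "GA za (sphere_embed z) = z * GB za (sphere_embed z)"
    unfolding B .
qed

lemma aux_nz: "(1::complex) + (of_real (cmod z))\<^sup>2 \<noteq> 0"
proof -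
  have "(1::complex) + (of_real (cmod z))\<^sup>2 = of_real (1 + (cmod z)\<^sup>2)" by simp
  moreover have "1 + (cmod z)\<^sup>2 > 0" by (simp add: add_pos_nonneg)
  ultimately show ?thesis by (metis of_real_eq_0_iff less_irrefl)
qed

lemma GA_GB_N: "GA za north_pole = 2" "GB za north_pole = 0"
  unfolding GA_def GB_def north_pole_def by (simp_all add: complex_eq_iff)

lemma cont_embed: "continuous_on UNIV sphere_embed"
proof -
  have "\<And>z::complex. 1 + (cmod z)\<^sup>2 \<noteq> 0" "\<And>z::complex. (cmod z)\<^sup>2 + 1 \<noteq> 0"
    by (metis add_pos_nonneg zero_less_one zero_le_power2 less_irrefl add.commute)+
  then show ?thesis unfolding sphere_embed_def[abs_def]
    by (intro continuous_intros) auto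
qed

lemma top_key:
  fixes g :: "complex \<Rightarrow> complex" and \<gamma> :: "real \<Rightarrow> complex"
  assumes sc: "simply_connected (Omega_hat g)"
  and p: "path \<gamma>" "pathfinish \<gamma> = pathstart \<gamma>" "\<forall>t. \<gamma> t \<in> escaping_set g"
  and za: "za \<notin> escaping_set g" and zb: "zb \<notin> escaping_set g"
  and wn: "winding_number (\<lambda>t. (\<gamma> t - zb) / (\<gamma> t - za)) 0 \<noteq> 0"
  shows False
proof -
  define N where "N = north_pole"
  define L where "L = sphere_embed \<circ> \<gamma>"
  define G where "G = (\<lambda>p. (GA za p - zb * GB za p) / (GA za p - za * GB za p))"
  have NO: "N \<in> Omega_hat g" unfolding N_def Omega_hat_def by simp
  have pL: "path L" unfolding L_def path_def
    by (rule continuous_on_compose[OF p(1)[unfolded path_def]], rule continuous_on_subset[OF cont_embed]) auto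
  have lL: "pathfinish L = pathstart L" using p(2) unfolding L_def pathfinish_def pathstart_def by simp
  have pi: "path_image \<gamma> \<subseteq> escaping_set g" using p(3) unfolding path_image_def by auto
  have iL: "path_image L \<subseteq> Omega_hat g" using pi unfolding L_def Omega_hat_def path_image_compose by auto
  have h: "homotopic_loops (Omega_hat g) L (linepath N N)"
    using sc unfolding simply_connected_def using pL lL iL NO by auto
  have Gemb: "G (sphere_embed z) = (z - zb) / (z - za)" if "z \<noteq> za" for z
  proof -
    have "GB za (sphere_embed z) \<noteq> 0" unfolding GA_GB_embed(1) using that
      by (simp add: aux_nz)
    then show ?thesis unfolding G_def GA_GB_embed(2)[of za z]
      by (simp add: left_diff_distrib[symmetric])
  qed
  have den: "GA za p - za * GB za p \<noteq> 0" if pO: "p \<in> Omega_hat g" for p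
  proof (cases "p = N")
    case True then show ?thesis unfolding N_def by (simp add: GA_GB_N)
  next
    case False
    then obtain z where z: "p = sphere_embed z" "z \<in> escaping_set g" using pO
      unfolding Omega_hat_def N_def by auto
    then have "z \<noteq> za" using za by auto
    have "GB za (sphere_embed z) \<noteq> 0" unfolding GA_GB_embed(1) using \<open>z \<noteq> za\<close>
      by (simp add: aux_nz)
    then show ?thesis unfolding z GA_GB_embed(2)[of za z] using \<open>z \<noteq> za\<close>
      by (simp add: left_diff_distrib[symmetric])
  qed
  have cG: "continuous_on (Omega_hat g) G" unfolding G_def GA_def[abs_def] GB_def[abs_def]
    using den unfolding GA_def GB_def by (intro continuous_intros) auto
  have mG: "G \<in> Omega_hat g \<rightarrow> -{0}"
  proof
    fix p assume pO: "p \<in> Omega_hat g"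
    show "G p \<in> -{0}"
    proof (cases "p = N")
      case True then show ?thesis unfolding G_def N_def by (simp add: GA_GB_N)
    next
      case False
      then obtain z where z: "p = sphere_embed z" "z \<in> escaping_set g" using pO
        unfolding Omega_hat_def N_def by auto
      then have "z \<noteq> za" "z \<noteq> zb" using za zb by auto
      then show ?thesis unfolding z(1) Gemb[OF \<open>z \<noteq> za\<close>] by simp
    qed
  qed
  have h2: "homotopic_loops (-{0}) (G \<circ> L) (G \<circ> linepath N N)"
    by (rule homotopic_loops_continuous_image[OF h cG mG])
  have e1: "G \<circ> L = (\<lambda>t. (\<gamma> t - zb) / (\<gamma> t - za))"
  proof
    fix t
    show "(G \<circ> L) t = (\<gamma> t - zb) / (\<gamma> t - za)"
    proof -
      have "\<gamma> t \<in> escaping_set g" using p(3) by auto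
      then have "\<gamma> t \<noteq> za" using za by auto
      then show ?thesis unfolding L_def o_def by (rule Gemb)
    qed
  qed
  have e2: "G \<circ> linepath N N = linepath 1 1"
    by (rule ext) (simp add: linepath_def G_def GA_GB_N N_def scaleR_conv_of_real algebra_simps)
  have "winding_number (G \<circ> L) 0 = winding_number (G \<circ> linepath N N) 0"
    by (rule winding_number_homotopic_loops[OF h2])
  then show False using wn unfolding e1 e2 by simp
qed



lemma pert:
  assumes dc: "delta_condition m \<delta> a" and m: "m \<ge> 1"
  shows "cmod (monic_poly m a z - (z^m + a 0)) \<le> \<delta> * real (m - 1) * (max 1 (cmod z))^(m-1)"
proof -
  have split: "{..<m} = insert 0 {1..<m}" using m by auto
  have "monic_poly m a z - (z^m + a 0) = (\<Sum>k\<in>{1..<m}. a k * z^k)"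
    unfolding monic_poly_def split by simp
  also have "cmod \<dots> \<le> (\<Sum>k\<in>{1..<m}. cmod (a k) * cmod z ^ k)"
    by (rule order.trans[OF norm_sum]) (simp add: norm_mult norm_power)
  also have "\<dots> \<le> (\<Sum>k\<in>{1..<m}. \<delta> * (max 1 (cmod z))^(m-1))"
  proof (rule sum_mono)
    fix k assume k: "k \<in> {1..<m}"
    have "k \<in> {1..m-1}" using k by auto
    then have ak: "cmod (a k) \<le> \<delta>" using dc unfolding delta_condition_def by (meson less_imp_le)
    have "cmod z ^ k \<le> (max 1 (cmod z)) ^ k" by (rule power_mono) auto
    also have "\<dots> \<le> (max 1 (cmod z))^(m-1)" by (rule power_increasing) (use k in auto)
    finally have zk: "cmod z ^ k \<le> (max 1 (cmod z))^(m-1)" .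
    show "cmod (a k) * cmod z ^ k \<le> \<delta> * (max 1 (cmod z))^(m-1)"
    proof (rule mult_mono[OF ak zk])
      show "0 \<le> \<delta>" using ak norm_ge_zero[of "a k"] by linarith
    qed auto
  qed
  also have "\<dots> = \<delta> * real (m - 1) * (max 1 (cmod z))^(m-1)" by simp
  finally show ?thesis .
qed

lemma escape_gen:
  fixes g :: "complex \<Rightarrow> complex"
  assumes l: "l > 1" and st: "\<And>w. P w \<Longrightarrow> P (g w) \<and> cmod (g w) \<ge> l * cmod w"
    and Pz: "P z" and z: "cmod z > 0"
  shows "z \<in> escaping_set g"
proof -
  have *: "P ((g^^n) z) \<and> cmod ((g^^n) z) \<ge> l^n * cmod z" for n
  proof (induction n)
    case 0 then show ?case using Pz by simp
  next
    case (Suc n)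
    then have "P ((g^^Suc n) z)" "cmod ((g^^Suc n) z) \<ge> l * cmod ((g^^n) z)" using st by auto
    moreover have "l * cmod ((g^^n) z) \<ge> l * (l^n * cmod z)" using Suc l by (intro mult_left_mono) auto
    ultimately show ?case by (simp add: mult.assoc)
  qed
  have "filterlim (\<lambda>n. norm (l^n)) at_top sequentially"
    using filterlim_realpow_sequentially_gt1[of l] l
    unfolding filterlim_at_infinity_conv_norm_at_top by simp
  then have "filterlim (\<lambda>n. l^n) at_top sequentially" using l by simp
  then have "filterlim (\<lambda>n. l^n * cmod z) at_top sequentially"
    by (rule filterlim_at_top_mult_tendsto_pos[OF tendsto_const z])
  then have "filterlim (\<lambda>n. cmod ((g^^n) z)) at_top sequentially"
    by (rule filterlim_at_top_mono) (use * in auto)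
  then show ?thesis unfolding escaping_set_def filterlim_at_infinity_conv_norm_at_top by simp
qed

lemma escape_shift: "z \<in> escaping_set g \<longleftrightarrow> g z \<in> escaping_set g"
proof -
  have "(\<lambda>n. (g ^^ n) (g z)) = (\<lambda>n. (g ^^ Suc n) z)" by (simp add: funpow_Suc_right del: funpow.simps)
  then show ?thesis unfolding escaping_set_def
    using filterlim_sequentially_Suc[of "\<lambda>n. (g ^^ n) z"] by simp
qed

lemma rt_re: assumes "v \<noteq> 0" "m \<ge> 1"
  shows "Re (rt m v) \<ge> cmod v powr (1 / real m) * (Re v / cmod v)"
proof -
  have "Re (rt m v) = exp (ln (cmod v) / real m) * cos (Arg v / real m)"
    unfolding rt_def Re_exp using assms by (simp add: Arg_eq_Im_Ln Re_divide Im_divide power2_eq_square)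
  also have "exp (ln (cmod v) / real m) = cmod v powr (1 / real m)"
    using assms by (simp add: powr_def)
  also have "cos (Arg v / real m) \<ge> Re v / cmod v"
  proof -
    have "cos (Arg v / real m) = cos (\<bar>Arg v\<bar> / real m)"
      by (metis abs_divide abs_of_nat cos_abs_real)
    also have "\<dots> \<ge> cos \<bar>Arg v\<bar>"
      by (rule cos_monotone_0_pi_le) (use Arg_bounded[of v] assms in \<open>auto simp: divide_le_eq mult_le_cancel_left1\<close>)
    finally show ?thesis using cos_Arg[OF assms(1)] by simp
  qed
  then have "cmod v powr (1 / real m) * cos (Arg v / real m) \<ge> cmod v powr (1 / real m) * (Re v / cmod v)"
    by (intro mult_left_mono) auto
  finally show ?thesis .
qed

lemma coeff_linprod:
  fixes A :: "complex multiset"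
  shows "coeff (\<Prod>x\<in>#A. [:-x, 1:]) (size A) = 1"
    and "A \<noteq> {#} \<Longrightarrow> coeff (\<Prod>x\<in>#A. [:-x, 1:]) (size A - 1) = - sum_mset A"
    and "\<forall>k>size A. coeff (\<Prod>x\<in>#A. [:-x, 1:]) k = 0"
proof (induction A)
  case empty
  { case 1 show ?case by simp }
  { case 2 then show ?case by simp }
  { case 3 show ?case by (auto simp: coeff_1) }
next
  case (add x A)
  let ?P = "\<Prod>x\<in>#A. [:-x, 1:]"
  have eq: "(\<Prod>y\<in>#add_mset x A. [:-y, 1:]) = smult (-x) ?P + pCons 0 ?P" by simp
  { case 1 show ?case unfolding eq using add.IH(1,3) by simp }
  { case 2 show ?case
    proof (cases "A = {#}")
      case True then show ?thesis by simp
    next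
      case False
      then have "size A \<ge> 1" by (simp add: Suc_leI nonempty_has_size)
      then obtain n where n: "size A = Suc n" by (cases "size A") auto
      show ?thesis unfolding eq using add.IH(1) add.IH(2)[OF False] n by simp
    qed }
  { case 3 show ?case
    proof (intro allI impI)
      fix k assume k: "k > size (add_mset x A)"
      then obtain j where j: "k = Suc j" "j > size A" by (cases k) auto
      show "coeff (\<Prod>y\<in>#add_mset x A. [:-y, 1:]) k = 0"
        unfolding eq using add.IH(3) j k by simp
    qed }
qed


lemma constants:
  fixes m::nat and \<epsilon>::real assumes m: "m \<ge> 3" and e: "\<epsilon> > 0"
  defines "T \<equiv> 2 powr (1/(real m - 1)) + \<epsilon>"
  defines "A \<equiv> T^(m-1)"
  defines "\<kappa> \<equiv> (A - 2)/((A+2)*real m)"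
  defines "d \<equiv> (A-2)/(2*A)"
  shows "T > 1" "A > 2" "0 < \<kappa>" "\<kappa> < 1" "0 < d" "(1-\<kappa>)^m \<ge> 4/(A+2)" "(1-\<kappa>)*T > 1"
    "\<And>dp. dp \<le> d \<Longrightarrow> A*(1-dp) \<ge> (A+2)/2"
proof -
  have p1: "2 powr (1/(real m - 1)) \<ge> 1" by (rule ge_one_powr_ge_zero) (use m in auto)
  then show T1: "T > 1" unfolding T_def using e by simp
  have "(2 powr (1/(real m - 1)))^(m-1) = 2 powr (real (m-1) * (1/(real m - 1)))"
    by (rule powr_power) simp
  also have "real (m-1) * (1/(real m - 1)) = 1" using m by (simp add: of_nat_diff)
  finally have p2: "(2 powr (1/(real m - 1)))^(m-1) = 2" by simp
  have "(2 powr (1/(real m - 1)))^(m-1) < T^(m-1)"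
    by (rule power_strict_mono) (use e m in \<open>auto simp: T_def\<close>)
  then show A2: "A > 2" unfolding A_def p2 .
  show k0: "0 < \<kappa>" unfolding \<kappa>_def using A2 m by (intro divide_pos_pos mult_pos_pos) auto
  have "A - 2 < (A + 2) * 1" by simp
  also have "\<dots> \<le> (A+2) * real m" using A2 m by (intro mult_left_mono) auto
  finally show k1: "\<kappa> < 1" unfolding \<kappa>_def using A2 m by (simp add: divide_less_eq)
  show "0 < d" unfolding d_def using A2 by simp
  have "1 + real m * (-\<kappa>) \<le> (1 + (-\<kappa>))^m" by (rule Bernoulli_inequality) (use k1 in simp)
  moreover have "1 + real m * (-\<kappa>) = 4/(A+2)"
  proof -
    have "real m * \<kappa> = (A-2)/(A+2)" unfolding \<kappa>_def using m by simp
    moreover have "1 - (A-2)/(A+2) = 4/(A+2)" using A2 by (simp add: field_simps)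
    ultimately show ?thesis by simp
  qed
  ultimately show B: "(1-\<kappa>)^m \<ge> 4/(A+2)" by simp
  show "(1-\<kappa>)*T > 1"
  proof (rule ccontr)
    assume "\<not> (1-\<kappa>)*T > 1"
    then have "((1-\<kappa>)*T)^(m-1) \<le> 1" using k1 T1 by (intro power_le_one) auto
    moreover have "((1-\<kappa>)*T)^(m-1) = (1-\<kappa>)^(m-1) * A" unfolding A_def by (simp add: power_mult_distrib)
    moreover have "(1-\<kappa>)^m \<le> (1-\<kappa>)^(m-1)" by (rule power_decreasing) (use k0 k1 in auto)
    moreover have "4/(A+2) * A > 1" using A2 by (simp add: field_simps)
    moreover have "(1-\<kappa>)^m * A \<le> (1-\<kappa>)^(m-1) * A" using A2 \<open>(1-\<kappa>)^m \<le> (1-\<kappa>)^(m-1)\<close> by simp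
    moreover have "4/(A+2) * A \<le> (1-\<kappa>)^m * A" using A2 B by (intro mult_right_mono) auto
    ultimately show False by linarith
  qed
  fix dp assume "dp \<le> d"
  then have "A * dp \<le> A * d" using A2 by simp
  also have "A * d = (A - 2)/2" unfolding d_def using A2 by simp
  finally have "A * dp \<le> (A - 2)/2" .
  then show "A*(1-dp) \<ge> (A+2)/2" by (simp add: field_simps right_diff_distrib)
qed


lemma LB:
  assumes dc: "delta_condition m \<delta> a" and m: "m \<ge> 1" and d0: "\<delta> \<ge> 0" and w: "cmod w \<ge> 1"
  shows "cmod (monic_poly m a w) \<ge> cmod w ^ m * (1 - \<delta> * real (m-1)) - cmod (a 0)"
proof -
  have P: "cmod (monic_poly m a w - (w^m + a 0)) \<le> \<delta> * real (m - 1) * cmod w ^ (m-1)"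
    using pert[OF dc m, of w] w by (simp add: max_def)
  have "cmod w ^ (m-1) \<le> cmod w ^ m" by (rule power_increasing) (use w in auto)
  then have P2: "\<delta> * real (m - 1) * cmod w ^ (m-1) \<le> \<delta> * real (m - 1) * cmod w ^ m"
    using d0 by (intro mult_left_mono) auto
  have t1: "cmod (w^m) \<le> cmod (w^m + a 0) + cmod (a 0)"
    using norm_triangle_ineq4[of "w^m + a 0" "a 0"] by simp
  have t2: "cmod (w^m + a 0) \<le> cmod (monic_poly m a w) + cmod (monic_poly m a w - (w^m + a 0))"
    using norm_triangle_ineq4[of "monic_poly m a w" "monic_poly m a w - (w^m + a 0)"] by simp
  have "cmod w ^ m * (1 - \<delta> * real (m-1)) = cmod (w^m) - \<delta> * real (m - 1) * cmod w ^ m"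
    by (simp add: norm_power algebra_simps)
  then show ?thesis using t1 t2 P P2 by linarith
qed

lemma poly_roots_sum:
  fixes a :: "nat \<Rightarrow> complex" and z0 :: complex
  assumes m: "m \<ge> 2"
  obtains R where "size R = m" "sum_mset R = - a (m-1)"
    "\<And>x. x \<in># R \<Longrightarrow> monic_poly m a x = z0"
proof -
  define p where "p = monom 1 m + (\<Sum>k<m. monom (a k) k) - [:z0:]"
  have ev: "poly p z = monic_poly m a z - z0" for z
    unfolding p_def monic_poly_def by (simp add: poly_sum poly_monom)
  have ck: "coeff p k = (if k = m then 1 else 0) + (if k < m then a k else 0) - (if k = 0 then z0 else 0)" for k
    unfolding p_def by (simp add: coeff_sum coeff_monom coeff_pCons split: nat.split)
  have cm: "coeff p m = 1" using ck[of m] m by simp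
  have cm1: "coeff p (m-1) = a (m-1)" using ck[of "m-1"] m by simp
  have deg: "degree p = m"
  proof (rule antisym)
    show "degree p \<le> m" by (rule degree_le) (use ck in auto)
    show "m \<le> degree p" by (rule le_degree) (use cm in simp)
  qed
  have p0: "p \<noteq> 0" using cm by auto
  obtain R where R: "size R = degree p" "p = smult (lead_coeff p) (\<Prod>x\<in>#R. [:-x, 1:])"
    using alg_closed_imp_factorization[OF p0] by blast
  have lc: "lead_coeff p = 1" using deg cm by simp
  have pR: "p = (\<Prod>x\<in>#R. [:-x, 1:])" using R(2) lc by simp
  have Rne: "R \<noteq> {#}" using R(1) deg m by auto
  show ?thesis
  proof
    show "size R = m" using R(1) deg by simp
    have "a (m-1) = coeff (\<Prod>x\<in>#R. [:-x, 1:]) (size R - 1)" using cm1 pR R(1) deg by simp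
    also have "\<dots> = - sum_mset R" by (rule coeff_linprod(2)[OF Rne])
    finally show "sum_mset R = - a (m-1)" by simp
    fix x assume "x \<in># R"
    then have "[:-x, 1:] dvd p" unfolding pR by (intro dvd_prod_mset) auto
    then have "poly p x = 0" by (simp add: poly_eq_0_iff_dvd)
    then show "monic_poly m a x = z0" using ev by simp
  qed
qed


lemma re_sum_div: "Re (sum_mset R / b) = sum_mset (image_mset (\<lambda>x. Re (x / b)) R)"
  by (induction R) (simp_all add: add_divide_distrib)

theorem mainTheorem12:
  fixes m :: nat
  assumes "m \<ge> 3"
  shows "\<forall>\<epsilon>>0. \<exists>\<delta>>0. \<forall>a :: nat \<Rightarrow> complex.
           delta_condition m \<delta> a \<and> simply_connected (Omega_hat (monic_poly m a)) \<longrightarrow>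
           {z. cmod z \<ge> 2 powr (1 / (real m - 1)) + \<epsilon>} \<subseteq> escaping_set (monic_poly m a)"
proof (intro allI impI)
  fix \<epsilon> :: real assume e: "\<epsilon> > 0"
  have m: "m \<ge> 3" by fact
  define T where "T = 2 powr (1/(real m - 1)) + \<epsilon>"
  define A where "A = T^(m-1)"
  define \<kappa> where "\<kappa> = (A - 2)/((A+2)*real m)"
  define d where "d = (A-2)/(2*A)"
  note C = constants[OF m e, folded T_def, folded A_def, folded \<kappa>_def d_def]
  define \<delta> where "\<delta> = min (min (d/real(m-1)) (\<kappa>/(8*real(m-1)))) (\<kappa>^2/8)"
  have m1: "real (m-1) > 0" using m by simp
  have d0: "\<delta> > 0" unfolding \<delta>_def using C m1 by auto
  define dp where "dp = \<delta> * real (m-1)"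
  have dp0: "dp \<ge> 0" unfolding dp_def using d0 m1 by simp
  have "\<delta> \<le> d/real(m-1)" unfolding \<delta>_def by (intro min.coboundedI1) simp
  then have dpd: "dp \<le> d" unfolding dp_def using m1 by (simp add: pos_le_divide_eq)
  have "\<delta> \<le> \<kappa>/(8*real(m-1))" unfolding \<delta>_def by (intro min.coboundedI1 min.cobounded2)
  then have "\<delta> * (8*real(m-1)) \<le> \<kappa>" using m1 by (simp add: pos_le_divide_eq)
  then have dpk: "dp \<le> \<kappa>/8" unfolding dp_def by (simp add: field_simps)
  have dk: "\<delta> \<le> \<kappa>^2/8" unfolding \<delta>_def by (rule min.cobounded2)
  have Adp: "A*(1-dp) \<ge> (A+2)/2" using C(8)[OF dpd] .
  show "\<exists>\<delta>>0. \<forall>a :: nat \<Rightarrow> complex.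
           delta_condition m \<delta> a \<and> simply_connected (Omega_hat (monic_poly m a)) \<longrightarrow>
           {z. cmod z \<ge> 2 powr (1 / (real m - 1)) + \<epsilon>} \<subseteq> escaping_set (monic_poly m a)"
  proof (intro exI[of _ \<delta>] conjI allI impI d0)
    fix a :: "nat \<Rightarrow> complex"
    assume H: "delta_condition m \<delta> a \<and> simply_connected (Omega_hat (monic_poly m a))"
    then have dc: "delta_condition m \<delta> a" and sc: "simply_connected (Omega_hat (monic_poly m a))" by auto
    define f where "f = monic_poly m a"
    define E where "E = escaping_set f"
    define c where "c = a 0"
    define r where "r = cmod c"
    have lb: "cmod (f w) \<ge> cmod w ^ m * (1 - dp) - r" if "cmod w \<ge> 1" for w
      using LB[OF dc _ _ that] m d0 unfolding f_def dp_def r_def c_def by simp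
    show "{z. cmod z \<ge> 2 powr (1 / (real m - 1)) + \<epsilon>} \<subseteq> escaping_set (monic_poly m a)"
    proof
      fix z0 assume "z0 \<in> {z. cmod z \<ge> 2 powr (1 / (real m - 1)) + \<epsilon>}"
      then have z0T: "cmod z0 \<ge> T" unfolding T_def by simp
      show "z0 \<in> escaping_set (monic_poly m a)"
      proof (rule ccontr)
        assume "z0 \<notin> escaping_set (monic_poly m a)"
        then have nz0: "z0 \<notin> E" unfolding E_def f_def .
        have dp1: "dp \<le> 1/2" using dpk C(4) by linarith
        have escP: "z \<in> E" if zT: "cmod z \<ge> T" and zr: "cmod z \<ge> r" for z
        proof -
          have st: "(T \<le> cmod (f w) \<and> r \<le> cmod (f w)) \<and> cmod (f w) \<ge> (A/2) * cmod w"
            if "T \<le> cmod w \<and> r \<le> cmod w" for w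
          proof -
            have w1: "cmod w \<ge> 1" using that C(1) by linarith
            have wA: "cmod w ^ (m-1) \<ge> A" unfolding A_def using that C(1) by (intro power_mono) auto
            have wm: "cmod w ^ m = cmod w * cmod w ^ (m-1)" using m by (cases m) auto
            have "cmod w ^ (m-1) * (1-dp) \<ge> A * (1 - dp)"
              using wA dp1 by (intro mult_right_mono) auto
            then have "cmod w ^ (m-1) * (1-dp) \<ge> (A+2)/2" using Adp by linarith
            then have h1: "cmod w * (cmod w ^ (m-1) * (1-dp)) \<ge> cmod w * ((A+2)/2)"
              by (intro mult_left_mono) auto
            have "cmod (f w) \<ge> cmod w ^ m * (1 - dp) - r" by (rule lb[OF w1])
            also have "cmod w ^ m * (1 - dp) = cmod w * (cmod w ^ (m-1) * (1-dp))" unfolding wm by simp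
            finally have "cmod (f w) \<ge> cmod w * ((A+2)/2) - cmod w" using h1 that by linarith
            then have fw: "cmod (f w) \<ge> (A/2) * cmod w" by (simp add: algebra_simps)
            have "(A/2) * cmod w \<ge> 1 * cmod w" using C(2) by (intro mult_right_mono) auto
            then show ?thesis using fw that by auto
          qed
          have "z \<in> escaping_set f"
            by (rule escape_gen[where P="\<lambda>w. T \<le> cmod w \<and> r \<le> cmod w" and l="A/2"])
               (use st C(1,2) zT zr in auto)
          then show ?thesis unfolding E_def .
        qed
        have rz0: "r > cmod z0" using escP[OF z0T] nz0 by force
        have rT: "r > T" using rz0 z0T by linarith
        have r1: "r \<ge> 1" and r0: "r > 0" using rT C(1) by auto
        have inK: "cmod (z^m + c) < (1 - \<kappa>/2) * r" if zE: "z \<notin> E" for z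
        proof -
          have fz: "cmod (f z) < (1-\<kappa>) * r"
          proof (rule ccontr)
            assume "\<not> cmod (f z) < (1-\<kappa>) * r"
            then have w: "cmod (f z) \<ge> (1-\<kappa>) * r" by simp
            define w where "w = f z"
            have "(1-\<kappa>) * r \<ge> (1-\<kappa>) * T" using rT C(4) by (intro mult_left_mono) auto
            then have w1: "cmod w \<ge> 1" using w C(7) unfolding w_def by linarith
            have "cmod w ^ m \<ge> ((1-\<kappa>) * r)^m" using w C(4) r0 unfolding w_def by (intro power_mono) auto
            also have "((1-\<kappa>) * r)^m = (1-\<kappa>)^m * (r * r^(m-1))"
              using m by (cases m) (auto simp: power_mult_distrib)
            finally have X1: "cmod w ^ m \<ge> (1-\<kappa>)^m * (r * r^(m-1))" .
            have "r^(m-1) \<ge> A" unfolding A_def using rT C(1) by (intro power_mono) auto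
            then have rr: "r * r^(m-1) \<ge> r * A" using r0 by (intro mult_left_mono) auto
            have "(1-\<kappa>)^m * (r * r^(m-1)) \<ge> (1-\<kappa>)^m * (r * A)" by (rule mult_left_mono[OF rr]) (use C(4) in simp)
            moreover have "(1-\<kappa>)^m * (r * A) \<ge> 4/(A+2) * (r * A)" using C(6) r0 C(2) by (intro mult_right_mono) auto
            ultimately have X2: "cmod w ^ m \<ge> 4/(A+2) * (r * A)" using X1 by linarith
            have "cmod w ^ m * (1 - dp) \<ge> 4/(A+2) * (r * A) * (1 - dp)" using X2 dp1 by (intro mult_right_mono) auto
            also have "4/(A+2) * (r * A) * (1 - dp) = (4*r/(A+2)) * (A * (1 - dp))" by (simp add: algebra_simps)
            also have "(4*r/(A+2)) * (A * (1 - dp)) \<ge> (4*r/(A+2)) * ((A+2)/2)"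
              using Adp r0 C(2) by (intro mult_left_mono) auto
            also have "(4*r/(A+2)) * ((A+2)/2) = 2 * r" using C(2) by (simp add: field_simps)
            finally have "cmod w ^ m * (1 - dp) \<ge> 2 * r" .
            then have fw: "cmod (f w) \<ge> r" using lb[OF w1] by linarith
            have "f w \<in> E" by (rule escP) (use fw rT in linarith)+
            then have "z \<in> E" using escape_shift[of z f] escape_shift[of "f z" f] unfolding w_def E_def by simp
            then show False using zE by simp
          qed
          have Mb: "(max 1 (cmod z))^(m-1) \<le> 4*r"
          proof (cases "cmod z \<le> 1")
            case True then show ?thesis using r1 by (simp add: max_def)
          next
            case False
            then have z1: "cmod z \<ge> 1" by simp
            have kr: "(1-\<kappa>)*r = r - \<kappa>*r" by (simp add: algebra_simps)
            have "\<kappa>*r > 0" using C(3) r0 by simp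
            then have "cmod z ^ m * (1 - dp) - r < r" using lb[OF z1] fz kr by linarith
            moreover have "cmod z ^ m * (1 - dp) \<ge> cmod z ^ m * (1/2)" using dp1 by (intro mult_left_mono) auto
            ultimately have "cmod z ^ m < 4 * r" by linarith
            moreover have "cmod z ^ (m-1) \<le> cmod z ^ m" by (rule power_increasing) (use z1 in auto)
            moreover have "max 1 (cmod z) = cmod z" using False by simp
            ultimately show ?thesis by simp
          qed
          have "cmod (f z - (z^m + c)) \<le> dp * (max 1 (cmod z))^(m-1)"
            using pert[OF dc, of z] m unfolding f_def c_def dp_def by simp
          also have "\<dots> \<le> dp * (4*r)" using Mb dp0 by (intro mult_left_mono) auto
          also have "\<dots> \<le> \<kappa>/8 * (4*r)" using dpk r0 by (intro mult_right_mono) auto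
          finally have pz: "cmod (f z - (z^m + c)) \<le> \<kappa>/2 * r" by simp
          have "cmod (z^m + c) \<le> cmod (f z) + cmod (f z - (z^m + c))"
            using norm_triangle_ineq4[of "f z" "f z - (z^m + c)"] by simp
          moreover have "(1-\<kappa>)*r + \<kappa>/2*r = (1-\<kappa>/2)*r" by (simp add: algebra_simps)
          ultimately show ?thesis using fz pz by linarith
        qed
        have m2: "m \<ge> 2" using m by simp
        have kr2: "(1-\<kappa>/2)*r = r - \<kappa>/2*r" by (simp add: algebra_simps)
        have krpos: "\<kappa>/2*r > 0" using C(3) r0 by simp
        obtain R where R: "size R = m" "sum_mset R = - a (m-1)" "\<And>x. x \<in># R \<Longrightarrow> monic_poly m a x = z0"
          using poly_roots_sum[OF m2, of a z0] by blast
        have RE: "x \<notin> E" if "x \<in># R" for x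
        proof
          assume "x \<in> E"
          then have "f x \<in> E" unfolding E_def using escape_shift[of x f] by simp
          then show False using R(3)[OF that] nz0 unfolding f_def by simp
        qed
        define e where "e = - c / of_real r"
        have cr: "c = - e * of_real r" unfolding e_def using r0 by simp
        have ne: "cmod e = 1" unfolding e_def r_def using r0 r_def by (simp add: norm_divide)
        have e0: "e \<noteq> 0" using ne by auto
        have key: "cmod (x^m / e - of_real r) < (1 - \<kappa>/2) * r" if "x \<notin> E" for x
        proof -
          have "x^m / e - of_real r = (x^m + c) / e" unfolding cr using e0 by (simp add: field_simps)
          then show ?thesis using inK[OF that] ne by (simp add: norm_divide)
        qed
        have xnz: "x \<noteq> 0" if "x \<notin> E" for x
        proof
          assume "x = 0"
          moreover have "(0::complex)^m = 0" using m by simp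
          ultimately have eq: "x^m + c = c" by simp
          have "cmod (x^m + c) = r" unfolding eq r_def ..
          then show False using inK[OF that] kr2 krpos by linarith
        qed
        have Rne: "R \<noteq> {#}" using R(1) m by auto
        then obtain za where za: "za \<in># R" by blast
        have zaE: "za \<notin> E" by (rule RE[OF za])
        have m1': "m \<ge> 1" using m by simp
        define va where "va = za^m / e"
        have va0: "va \<noteq> 0" unfolding va_def using xnz[OF zaE] e0 by simp
        define ua where "ua = rt m va"
        define \<beta> where "\<beta> = za / ua"
        have ua0: "ua \<noteq> 0" unfolding ua_def by (rule rt_nz)
        have b0: "\<beta> \<noteq> 0" unfolding \<beta>_def using ua0 xnz[OF zaE] by simp
        have bm: "\<beta>^m = e"
        proof -
          have "\<beta>^m = za^m / ua^m" unfolding \<beta>_def by (simp add: power_divide)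
          also have "ua^m = va" unfolding ua_def by (rule rt_pow[OF m1' va0])
          finally show ?thesis unfolding va_def using xnz[OF zaE] e0 by simp
        qed
        have nb: "cmod \<beta> = 1"
        proof -
          have "cmod \<beta> ^ m = cmod (\<beta>^m)" by (rule norm_power[symmetric])
          also have "\<dots> = 1 ^ m" using bm ne by simp
          finally have "cmod \<beta> ^ m = 1 ^ m" .
          then show ?thesis using m by (subst (asm) power_eq_iff_eq_base) auto
        qed
        have "\<exists>zb. zb \<in># R \<and> zb / \<beta> \<noteq> rt m ((zb / \<beta>)^m)"
        proof (rule ccontr)
          assume "\<not> ?thesis"
          then have pr: "\<And>x. x \<in># R \<Longrightarrow> x / \<beta> = rt m ((x / \<beta>)^m)" by blast
          have reb: "Re (x / \<beta>) \<ge> \<kappa>^2/8" if xR: "x \<in># R" for x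
          proof -
            define v where "v = (x / \<beta>)^m"
            have vx: "v = x^m / e" unfolding v_def by (simp add: power_divide bm)
            have v0: "v \<noteq> 0" unfolding vx using xnz[OF RE[OF xR]] e0 by simp
            have vr: "cmod (v - of_real r) < (1 - \<kappa>/2) * r" unfolding vx by (rule key[OF RE[OF xR]])
            have "r - Re v \<le> cmod (v - of_real r)"
              by (metis abs_Re_le_cmod abs_le_iff minus_complex.simps(1) minus_diff_eq Re_complex_of_real)
            then have Rev: "Re v > \<kappa>/2 * r" using vr by (simp add: algebra_simps)
            have "cmod v \<le> cmod (v - of_real r) + r"
              using norm_triangle_ineq[of "v - of_real r" "of_real r"] r0 by simp
            then have cv: "cmod v < 2 * r" using vr kr2 krpos by linarith
            have cvge: "cmod v \<ge> Re v" by (rule complex_Re_le_cmod)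
            have "\<kappa>/4 * cmod v \<le> \<kappa>/4 * (2*r)" using cv C(3) by (intro mult_left_mono) auto
            then have "\<kappa>/4 * cmod v \<le> Re v" using Rev by simp
            then have rat: "Re v / cmod v \<ge> \<kappa>/4" using v0 by (simp add: pos_le_divide_eq)
            have "\<kappa>/2 * r \<ge> \<kappa>/2 * 1" using r1 C(3) by (intro mult_left_mono) auto
            then have cvk: "cmod v \<ge> \<kappa>/2" using Rev cvge by linarith
            have pw: "cmod v powr (1 / real m) \<ge> \<kappa>/2"
            proof (cases "cmod v \<ge> 1")
              case True
              then have "cmod v powr (1 / real m) \<ge> 1" by (intro ge_one_powr_ge_zero) auto
              then show ?thesis using C(4) by linarith
            next
              case False
              have "cmod v powr 1 \<le> cmod v powr (1 / real m)"
                by (rule powr_mono') (use False m in auto)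
              then show ?thesis using cvk by simp
            qed
            have "Re (x / \<beta>) = Re (rt m v)" using pr[OF xR] unfolding v_def by simp
            also have "\<dots> \<ge> cmod v powr (1 / real m) * (Re v / cmod v)" by (rule rt_re[OF v0 m1'])
            finally have "Re (x / \<beta>) \<ge> cmod v powr (1 / real m) * (Re v / cmod v)" .
            moreover have "cmod v powr (1 / real m) * (Re v / cmod v) \<ge> \<kappa>/2 * (\<kappa>/4)"
              using pw rat C(3) by (intro mult_mono) auto
            moreover have "\<kappa>/2 * (\<kappa>/4) = \<kappa>^2/8" by (simp add: power2_eq_square)
            ultimately show ?thesis by linarith
          qed
          obtain R' where R': "R = add_mset za R'" using multi_member_split[OF za] by blast
          have e1: "Re (sum_mset R / \<beta>) = Re (za / \<beta>) + sum_mset (image_mset (\<lambda>x. Re (x / \<beta>)) R')"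
            unfolding re_sum_div R' by simp
          have "sum_mset (image_mset (\<lambda>x. Re (x / \<beta>)) R') \<ge> sum_mset (image_mset (\<lambda>x. 0) R')"
          proof (rule sum_mset_mono)
            fix x assume "x \<in># R'"
            then have "x \<in># R" unfolding R' by simp
            then have "Re (x / \<beta>) \<ge> \<kappa>^2/8" by (rule reb)
            moreover have "\<kappa>^2/8 \<ge> 0" by simp
            ultimately show "0 \<le> Re (x / \<beta>)" by linarith
          qed
          then have e2: "sum_mset (image_mset (\<lambda>x. Re (x / \<beta>)) R') \<ge> 0" by simp
          have S1: "Re (sum_mset R / \<beta>) \<ge> \<kappa>^2/8" using e1 e2 reb[OF za] by linarith
          have "m - 1 \<in> {1..m-1}" using m by auto
          then have am: "cmod (a (m-1)) < \<delta>" using dc unfolding delta_condition_def by blast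
          have "Re (sum_mset R / \<beta>) \<le> cmod (sum_mset R / \<beta>)" by (rule complex_Re_le_cmod)
          also have "\<dots> = cmod (a (m-1))" unfolding R(2) using nb by (simp add: norm_divide)
          finally show False using S1 am dk by linarith
        qed
        then obtain zb where zb: "zb \<in># R" "zb / \<beta> \<noteq> rt m ((zb / \<beta>)^m)" by blast
        have zbE: "zb \<notin> E" by (rule RE[OF zb(1)])
        define s2 where "s2 = (1 - \<kappa>/4) * r"
        have s2a: "0 < s2" "s2 < r" unfolding s2_def using C(3,4) r0 by auto
        have s2b: "(1 - \<kappa>/2) * r \<le> s2" unfolding s2_def using C(3) r0 by (intro mult_right_mono) auto
        have va_in: "cmod (va - of_real r) < s2" using key[OF zaE] s2b unfolding va_def by linarith
        have za_eq: "za = \<beta> * rt m va" unfolding \<beta>_def ua_def[symmetric] using ua0 by simp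
        have zbc: "\<forall>v. Re v > 0 \<longrightarrow> \<beta> * rt m v \<noteq> zb"
        proof (intro allI impI notI)
          fix v assume v: "Re v > 0" "\<beta> * rt m v = zb"
          then have "zb / \<beta> = rt m v" using b0 by (simp add: field_simps)
          moreover have "rt m v ^ m = v" using v(1) by (intro rt_pow[OF m1']) auto
          ultimately show False using zb(2) by simp
        qed
        have W: "winding_number ((\<lambda>v. (\<beta> * rt m v - zb) / (\<beta> * rt m v - za)) \<circ> circlepath (of_real r) s2) 0 = -1"
          by (rule wind_key[OF m1' s2a va_in za_eq b0 zbc])
        define \<gamma> where "\<gamma> = (\<lambda>v. \<beta> * rt m v) \<circ> circlepath (of_real r) s2"
        have cd: "cmod (circlepath (of_real r) s2 t - of_real r) = s2" for t
          using s2a by (simp add: circlepath norm_mult)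
        have cH: "Re (circlepath (of_real r) s2 t) > 0" for t
        proof -
          have "r - Re (circlepath (of_real r) s2 t) \<le> cmod (circlepath (of_real r) s2 t - of_real r)"
            by (metis abs_Re_le_cmod abs_le_iff minus_complex.simps(1) minus_diff_eq Re_complex_of_real)
          then show ?thesis using cd[of t] s2a by simp
        qed
        have holo: "(\<lambda>v. \<beta> * rt m v) holomorphic_on {v. Re v > 0}"
          using rt_holo[OF m1'] by (intro holomorphic_intros)
        have pimg: "path_image (circlepath (of_real r) s2) \<subseteq> {v. Re v > 0}"
          unfolding path_image_def using cH by auto
        have vg: "valid_path \<gamma>" unfolding \<gamma>_def
          by (rule valid_path_compose_holomorphic[OF valid_path_circlepath holo open_halfspace_Re_gt pimg])
        have pg: "path \<gamma>" by (rule valid_path_imp_path[OF vg])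
        have lg: "pathfinish \<gamma> = pathstart \<gamma>" unfolding \<gamma>_def by (simp add: pathfinish_compose pathstart_compose)
        have allE: "\<forall>t. \<gamma> t \<in> escaping_set f"
        proof
          fix t
          define v where "v = circlepath (of_real r) s2 t"
          have v0: "v \<noteq> 0" using cH[of t] unfolding v_def by auto
          have "(\<gamma> t)^m = \<beta>^m * rt m v ^ m" unfolding \<gamma>_def v_def by (simp add: power_mult_distrib)
          also have "\<dots> = e * v" using bm rt_pow[OF m1' v0] by simp
          finally have "(\<gamma> t)^m + c = e * (v - of_real r)" unfolding cr by (simp add: algebra_simps)
          then have "cmod ((\<gamma> t)^m + c) = s2" using ne cd[of t] unfolding v_def by (simp add: norm_mult)
          then have "\<not> cmod ((\<gamma> t)^m + c) < (1 - \<kappa>/2) * r" using s2b by simp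
          then show "\<gamma> t \<in> escaping_set f" using inK unfolding E_def by blast
        qed
        have wn: "winding_number (\<lambda>t. (\<gamma> t - zb) / (\<gamma> t - za)) 0 \<noteq> 0"
        proof -
          have "(\<lambda>t. (\<gamma> t - zb) / (\<gamma> t - za)) = (\<lambda>v. (\<beta> * rt m v - zb) / (\<beta> * rt m v - za)) \<circ> circlepath (of_real r) s2"
            unfolding \<gamma>_def by (simp add: o_def)
          then show ?thesis using W by simp
        qed
        show False
          by (rule top_key[OF sc[folded f_def] pg lg allE]) (use zaE zbE wn E_def in auto)
      qed
    qed
  qed
qed

end
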